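(* Fix constants $\alpha,\beta$. For parameters $r,s$, let $a^{(r,s)}_n$ be the sequence with generating function $$G_{r,s}(x)=\cfrac{1}{1-(\alpha+s)x-\cfrac{\beta x^2}{1-(\alpha+r)x-\cfrac{\beta x^2}{1-(\alpha+r)x}}},$$ and let $b^{(r,s)}_n$ be its revert transform. Then the Hankel transform $\left(\det(b^{(r,s)}_{i+j})_{0\le i,j\le n}\right)_{n\ge0}$ is the same sequence for all values of $r$ and $s$.
   Context: For a power series $g(x)$ with $g(0)\ne0$, its revert transform is the sequence whose generating function is $\frac1x\,\mathrm{Rev}(xg(x))$, where $\mathrm{Rev}(f)$ denotes the compositional inverse of $f$ (the series $u$ with $f(u(x))=x$, $u(0)=0$). The Hankel transform of a sequence $(b_n)$ is the sequence $h_n=\det(b_{i+j})_{0\le i,j\le n}$, $n\ge0$. *)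

theory Defs
  imports "HOL-Computational_Algebra.Formal_Power_Series" "Jordan_Normal_Form.Determinant"
begin

text \<open>The generating function G_{r,s}(x) as a formal power series (continued fraction,
  every denominator has constant term 1, so the fps inverses are genuine inverses).\<close>
definition G_rs :: "complex \<Rightarrow> complex \<Rightarrow> complex \<Rightarrow> complex \<Rightarrow> complex fps" where
  "G_rs \<alpha> \<beta> r s =
     (let inner = 1 - fps_const (\<alpha> + r) * fps_X;
          mid = 1 - fps_const (\<alpha> + r) * fps_X - fps_const \<beta> * fps_X ^ 2 * inverse inner
      in inverse (1 - fps_const (\<alpha> + s) * fps_X - fps_const \<beta> * fps_X ^ 2 * inverse mid))"

text \<open>Revert transform of g (with g(0) nonzero): coefficients of (1/x) Rev(x g(x)),
  where Rev is the compositional inverse (library fps_inv).\<close>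
definition revert_transform :: "complex fps \<Rightarrow> nat \<Rightarrow> complex" where
  "revert_transform g n = fps_nth (fps_inv (fps_X * g)) (n + 1)"

definition hankel_transform :: "(nat \<Rightarrow> complex) \<Rightarrow> nat \<Rightarrow> complex" where
  "hankel_transform b n = det (mat (n + 1) (n + 1) (\<lambda>(i, j). b (i + j)))"

end

theory Submission
  imports Defs
begin


lemma inv_uniq: "(e::'a::comm_ring_1) * u = 1 \<Longrightarrow> e * v = 1 \<Longrightarrow> u = v"
  by (metis mult.assoc mult.commute mult_1_right)
lemma alg:
  fixes X a p q w p0 q0 w0 z A R S B :: "'a::comm_ring_1"
  assumes ea: "(1 + R * X) * a = 1"
   and ep: "(1 - (A + R) * (X * a)) * p = 1"
   and eq: "(1 - (A + R) * (X * a) - B * (X * a)^2 * p) * q = 1"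
   and ew: "(1 - (A + S) * (X * a) - B * (X * a)^2 * q) * w = 1"
   and ep0: "(1 - A * X) * p0 = 1"
   and eq0: "(1 - A * X - B * X^2 * p0) * q0 = 1"
   and ew0: "(1 - A * X - B * X^2 * q0) * w0 = 1"
   and ez: "(1 + (R - S) * (X * w0)) * z = 1"
 shows "X * a * w = X * w0 * z"
proof -
  have h1: "1 - (A + R) * (X * a) = (1 - A * X) * a"
  proof -
    have "(1 - A * X) * a = (1 + R * X) * a - (A + R) * X * a" by (simp add: algebra_simps)
    also have "\<dots> = 1 - (A + R) * (X * a)" using ea by (simp add: algebra_simps)
    finally show ?thesis by simp
  qed
  have p: "p = (1 + R * X) * p0"
  proof (rule inv_uniq[OF ep])
    have "(1 - (A + R) * (X * a)) * ((1 + R * X) * p0) = ((1 + R * X) * a) * ((1 - A * X) * p0)"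
      unfolding h1 by (simp add: algebra_simps)
    then show "(1 - (A + R) * (X * a)) * ((1 + R * X) * p0) = 1" using ea ep0 by simp
  qed
  have h2: "1 - (A + R) * (X * a) - B * (X * a)^2 * p = (1 - A * X - B * X^2 * p0) * a"
  proof -
    have "B * (X * a)^2 * p = B * X^2 * p0 * a * ((1 + R * X) * a)" unfolding p by (simp add: algebra_simps power2_eq_square)
    then have "B * (X * a)^2 * p = B * X^2 * p0 * a" using ea by simp
    then show ?thesis unfolding h1 by (simp add: algebra_simps)
  qed
  have q: "q = (1 + R * X) * q0"
  proof (rule inv_uniq[OF eq])
    have "(1 - (A + R) * (X * a) - B * (X * a)^2 * p) * ((1 + R * X) * q0) = ((1 + R * X) * a) * ((1 - A * X - B * X^2 * p0) * q0)"
      unfolding h2 by (simp add: algebra_simps)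
    then show "(1 - (A + R) * (X * a) - B * (X * a)^2 * p) * ((1 + R * X) * q0) = 1" using ea eq0 by simp
  qed
  define T where "T = 1 - A * X - B * X^2 * q0 + (R - S) * X"
  have h3: "1 - (A + S) * (X * a) - B * (X * a)^2 * q = T * a"
  proof -
    have "B * (X * a)^2 * q = B * X^2 * q0 * a * ((1 + R * X) * a)" unfolding q by (simp add: algebra_simps power2_eq_square)
    then have 1: "B * (X * a)^2 * q = B * X^2 * q0 * a" using ea by simp
    have "T * a = (1 + R * X) * a - (A + S) * X * a - B * X^2 * q0 * a" unfolding T_def by (simp add: algebra_simps)
    also have "\<dots> = 1 - (A + S) * (X * a) - B * (X * a)^2 * q" using ea 1 by (simp add: algebra_simps)
    finally show ?thesis by simp
  qed
  have t1: "T * (a * w) = 1" using ew unfolding h3 by (simp add: algebra_simps)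
  have t2: "T * (w0 * z) = 1"
  proof -
    have "T * (w0 * z) = ((1 - A * X - B * X^2 * q0) * w0 + (R - S) * (X * w0)) * z" unfolding T_def by (simp add: algebra_simps)
    then show ?thesis using ew0 ez by simp
  qed
  have "a * w = w0 * z" by (rule inv_uniq[OF t1 t2])
  then show ?thesis by (simp add: mult.assoc)
qed

lemma inv_r: "fps_nth (f::complex fps) 0 \<noteq> 0 \<Longrightarrow> f * inverse f = 1"
  by (rule inverse_mult_eq_1')

lemma Ncomp:
  assumes "fps_nth (g::complex fps) 0 = 0"
  shows "(fps_X * inverse (1 + fps_const t * fps_X)) oo g = g * inverse (1 + fps_const t * g)"
  using assms by (simp add: fps_compose_mult_distrib fps_compose_add_distrib fps_inverse_compose)

lemma key:
 fixes \<alpha> \<beta> r s :: complex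
 defines "Nr \<equiv> fps_X * inverse (1 + fps_const r * fps_X)"
 shows "(fps_X * G_rs \<alpha> \<beta> r s) oo Nr = (fps_X * inverse (1 + fps_const (r - s) * fps_X)) oo (fps_X * G_rs \<alpha> \<beta> 0 0)"
proof -
  have N0: "fps_nth Nr 0 = 0" by (simp add: Nr_def)
  have N0': "fps_nth (fps_X * G_rs \<alpha> \<beta> 0 0) 0 = 0" by simp
  define X :: "complex fps" where "X = fps_X"
  define a where "a = inverse (1 + fps_const r * X)"
  have Nr: "Nr = X * a" by (simp add: Nr_def a_def X_def)
  define p where "p = inverse (1 - fps_const (\<alpha> + r) * Nr)"
  define q where "q = inverse (1 - fps_const (\<alpha> + r) * Nr - fps_const \<beta> * Nr^2 * p)"
  define w where "w = inverse (1 - fps_const (\<alpha> + s) * Nr - fps_const \<beta> * Nr^2 * q)"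
  define p0 where "p0 = inverse (1 - fps_const \<alpha> * X)"
  define q0 where "q0 = inverse (1 - fps_const \<alpha> * X - fps_const \<beta> * X^2 * p0)"
  define w0 where "w0 = inverse (1 - fps_const \<alpha> * X - fps_const \<beta> * X^2 * q0)"
  define z where "z = inverse (1 + fps_const (r - s) * (X * w0))"
  have ea: "(1 + fps_const r * X) * a = 1" unfolding a_def by (rule inv_r) (simp add: X_def)
  have ep: "(1 - fps_const (\<alpha> + r) * Nr) * p = 1" unfolding p_def by (rule inv_r) (simp add: N0 fps_nth_power_0)
  have eq: "(1 - fps_const (\<alpha> + r) * Nr - fps_const \<beta> * Nr^2 * p) * q = 1" unfolding q_def by (rule inv_r) (simp add: N0 fps_nth_power_0)
  have ew: "(1 - fps_const (\<alpha> + s) * Nr - fps_const \<beta> * Nr^2 * q) * w = 1" unfolding w_def by (rule inv_r) (simp add: N0 fps_nth_power_0)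
  have ep0: "(1 - fps_const \<alpha> * X) * p0 = 1" unfolding p0_def by (rule inv_r) (simp add: X_def)
  have eq0: "(1 - fps_const \<alpha> * X - fps_const \<beta> * X^2 * p0) * q0 = 1" unfolding q0_def by (rule inv_r) (simp add: X_def)
  have ew0: "(1 - fps_const \<alpha> * X - fps_const \<beta> * X^2 * q0) * w0 = 1" unfolding w0_def by (rule inv_r) (simp add: X_def)
  have ez: "(1 + fps_const (r - s) * (X * w0)) * z = 1" unfolding z_def by (rule inv_r) (simp add: X_def)
  have L: "(fps_X * G_rs \<alpha> \<beta> r s) oo Nr = Nr * w"
    unfolding G_rs_def Let_def w_def q_def p_def
    by (simp add: fps_compose_mult_distrib[OF N0] fps_compose_sub_distrib fps_compose_add_distrib
       fps_X_power_compose[OF N0] fps_inverse_compose N0)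
  have R: "(fps_X * inverse (1 + fps_const (r - s) * fps_X)) oo (fps_X * G_rs \<alpha> \<beta> 0 0) = X * w0 * z"
    unfolding Ncomp[OF N0'] unfolding G_rs_def Let_def w0_def q0_def p0_def z_def X_def by simp
  have "Nr * w = X * w0 * z"
    unfolding Nr
    by (rule alg[where A="fps_const \<alpha>" and R="fps_const r" and S="fps_const s" and B="fps_const \<beta>"])
       (use ea ep eq ew ep0 eq0 ew0 ez in \<open>simp_all add: Nr\<close>)
  then show ?thesis using L R by simp
qed

lemma fps_inv_unique:
  fixes f w :: "complex fps"
  assumes f0: "fps_nth f 0 = 0" and f1: "fps_nth f 1 \<noteq> 0" and w0: "fps_nth w 0 = 0"
    and fw: "f oo w = fps_X"
  shows "w = fps_inv f"
proof -
  have "fps_inv f oo (f oo w) = fps_inv f oo f oo w" by (rule fps_compose_assoc[OF w0 f0])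
  then have "fps_inv f = fps_X oo w" using fw fps_inv[OF f0 f1] by simp
  then show ?thesis using w0 by simp
qed

lemma fps_inv_nth1:
  fixes f :: "complex fps"
  shows "fps_nth (fps_inv f) 1 = 1 / fps_nth f 1"
  by (simp add: fps_inv_def)

lemma fps_inv_nth0:
  fixes f :: "complex fps"
  shows "fps_nth (fps_inv f) 0 = 0"
  by (simp add: fps_inv_def)

lemma G_nth0: "fps_nth (G_rs \<alpha> \<beta> r s) 0 = 1"
  by (simp add: G_rs_def Let_def fps_nth_power_0)

lemma Mcomp:
  fixes e :: complex
  shows "(fps_X * inverse (1 + fps_const e * fps_X)) oo (fps_X * inverse (1 - fps_const e * fps_X)) = fps_X"
proof -
  define g where "g = inverse (1 - fps_const e * fps_X)"
  have eg: "(1 - fps_const e * fps_X) * g = 1" unfolding g_def by (rule inv_r) simp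
  have M0: "fps_nth (fps_X * g) 0 = 0" by simp
  have "(fps_X * inverse (1 + fps_const e * fps_X)) oo (fps_X * g) = (fps_X * g) * inverse (1 + fps_const e * (fps_X * g))"
    by (rule Ncomp[OF M0])
  also have "inverse (1 + fps_const e * (fps_X * g)) = 1 - fps_const e * fps_X"
  proof (rule fps_inverse_unique)
    show "(1 + fps_const e * (fps_X * g)) * (1 - fps_const e * fps_X) = 1"
      using eg by (simp add: algebra_simps)
  qed
  also have "fps_X * g * (1 - fps_const e * fps_X) = fps_X" by (metis eg mult.assoc mult.commute mult_1_right)
  finally show ?thesis unfolding g_def .
qed


lemma revert_formula:
  fixes \<alpha> \<beta> r s :: complex
  assumes u0_def: "u0 = fps_inv (fps_X * G_rs \<alpha> \<beta> 0 0)"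
  and c0_def: "c0 = inverse (fps_shift 1 u0)"
  and M_def: "M = fps_X * inverse (1 - fps_const (r - s) * fps_X)"
  and c'_def: "c' = (1 - fps_const (r - s) * fps_X) * (c0 oo M) + fps_const r * fps_X"
  shows "fps_inv (fps_X * G_rs \<alpha> \<beta> r s) = fps_X * inverse c'" and "fps_nth c' 0 = 1"
    and "fps_nth c0 0 = 1"
proof -
  define f0 where "f0 = fps_X * G_rs \<alpha> \<beta> 0 0"
  define f where "f = fps_X * G_rs \<alpha> \<beta> r s"
  have f00: "fps_nth f0 0 = 0" and f01: "fps_nth f0 1 = 1" unfolding f0_def by (simp_all add: G_nth0)
  have ff0: "fps_nth f 0 = 0" and ff1: "fps_nth f 1 = 1" unfolding f_def by (simp_all add: G_nth0)
  have u00: "fps_nth u0 0 = 0" and u01: "fps_nth u0 1 = 1"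
    unfolding u0_def f0_def[symmetric] using fps_inv_nth1[of f0] f01 by (simp_all add: fps_inv_nth0)
  define b0 where "b0 = fps_shift 1 u0"
  have b00: "fps_nth b0 0 = 1" unfolding b0_def using u01 by simp
  have ub: "u0 = fps_X * b0"
    by (rule fps_ext) (simp add: b0_def fps_X_mult_nth u00)
  have cb: "b0 * c0 = 1" unfolding c0_def b0_def[symmetric] by (rule inv_r) (simp add: b00)
  show c00: "fps_nth c0 0 = 1" unfolding c0_def b0_def[symmetric] using b00 by simp
  define Nr where "Nr = fps_X * inverse (1 + fps_const r * fps_X)"
  define Ne where "Ne = fps_X * inverse (1 + fps_const (r - s) * fps_X)"
  have Nr0: "fps_nth Nr 0 = 0" unfolding Nr_def by simp
  have M0: "fps_nth M 0 = 0" unfolding M_def by simp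
  define k where "k = inverse (1 + fps_const r * u0)"
  have ek: "(1 + fps_const r * u0) * k = 1" unfolding k_def by (rule inv_r) (simp add: u00)
  define m where "m = inverse (c0 + fps_const r * fps_X)"
  have em: "(c0 + fps_const r * fps_X) * m = 1" unfolding m_def by (rule inv_r) (simp add: c00)
  have "(c0 + fps_const r * fps_X) * (b0 * k) = (b0 * c0 + fps_const r * (fps_X * b0)) * k"
    by (simp add: algebra_simps)
  also have "\<dots> = 1" using cb ek ub by simp
  finally have bkm: "b0 * k = m" by (rule inv_uniq[OF _ em])
  define v where "v = Nr oo u0"
  have v: "v = fps_X * m"
    unfolding v_def Nr_def Ncomp[OF u00] k_def[symmetric] using bkm ub by (simp add: mult.assoc)
  have v0: "fps_nth v 0 = 0" unfolding v by simp
  define w where "w = v oo M"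
  have w0: "fps_nth w 0 = 0" unfolding w_def using v0 by simp
  have "f oo w = (f oo v) oo M" unfolding w_def by (rule fps_compose_assoc[OF M0 v0])
  also have "f oo v = (f oo Nr) oo u0" unfolding v_def by (rule fps_compose_assoc[OF u00 Nr0])
  also have "f oo Nr = Ne oo f0" unfolding f_def Nr_def Ne_def f0_def by (rule key)
  also have "(Ne oo f0) oo u0 = Ne oo (f0 oo u0)" by (rule fps_compose_assoc[OF u00 f00, symmetric])
  also have "f0 oo u0 = fps_X" unfolding u0_def f0_def[symmetric] by (rule fps_inv_right[OF f00]) (use f01 in simp)
  also have "(Ne oo fps_X) oo M = fps_X" unfolding Ne_def M_def by (simp add: Mcomp)
  finally have fw: "f oo w = fps_X" .
  have ff1': "fps_nth f 1 \<noteq> 0" using ff1 by simp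
  have winv: "fps_inv f = w" by (rule fps_inv_unique[OF ff0 ff1' w0 fw, symmetric])
  define g where "g = inverse (1 - fps_const (r - s) * fps_X)"
  have eg: "(1 - fps_const (r - s) * fps_X) * g = 1" unfolding g_def by (rule inv_r) simp
  define C where "C = c0 oo M"
  define y where "y = inverse (C + fps_const r * M)"
  have ey: "(C + fps_const r * M) * y = 1" unfolding y_def by (rule inv_r) (simp add: C_def M0 c00)
  have w: "w = M * y"
    unfolding w_def v y_def C_def using M0 c00
    by (simp add: fps_compose_mult_distrib fps_compose_add_distrib m_def fps_inverse_compose)
  have c'C: "c' = (1 - fps_const (r - s) * fps_X) * C + fps_const r * fps_X" unfolding c'_def C_def by simp
  have "c' * (g * y) = ((1 - fps_const (r - s) * fps_X) * g * C + fps_const r * (fps_X * g)) * y"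
    unfolding c'C by (simp add: algebra_simps)
  also have "\<dots> = 1" using eg ey by (simp add: M_def g_def)
  finally have gy: "c' * (g * y) = 1" .
  show c'0: "fps_nth c' 0 = 1" unfolding c'C C_def using M0 c00 by simp
  have "g * y = inverse c'" by (rule inv_uniq[OF gy inv_r]) (simp add: c'0)
  then show "fps_inv (fps_X * G_rs \<alpha> \<beta> r s) = fps_X * inverse c'"
    using winv w unfolding f_def M_def g_def[symmetric] by (simp add: mult.assoc)
qed



lemma h_eq: "inverse (1 - fps_const (e::complex) * fps_X) = Abs_fps (\<lambda>n. e^n)"
proof (rule fps_inverse_unique)
  show "(1 - fps_const e * fps_X) * Abs_fps (\<lambda>n. e ^ n) = 1"
  proof (rule fps_ext)
    fix n show "fps_nth ((1 - fps_const e * fps_X) * Abs_fps (\<lambda>n. e ^ n)) n = fps_nth 1 n"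
      by (cases n) (simp_all add: algebra_simps)
  qed
qed

lemma h_nth: "fps_nth (inverse (1 - fps_const (e::complex) * fps_X)) n = e^n"
  by (simp add: h_eq)

lemma h_pow_nth: "fps_nth (inverse (1 - fps_const (e::complex) * fps_X) ^ Suc j) q = of_nat ((q + j) choose q) * e^q"
proof (induction j arbitrary: q)
  case 0
  then show ?case by (simp add: h_eq)
next
  case (Suc j)
  have "fps_nth (inverse (1 - fps_const e * fps_X) ^ Suc (Suc j)) q
      = (\<Sum>i=0..q. fps_nth (inverse (1 - fps_const e * fps_X) ^ Suc j) i * fps_nth (inverse (1 - fps_const e * fps_X)) (q - i))"
    by (simp only: power_Suc2[of _ "Suc j"] fps_mult_nth)
  also have "\<dots> = (\<Sum>i=0..q. of_nat ((j + i) choose i) * e^q)"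
  proof (rule sum.cong)
    fix i assume i: "i \<in> {0..q}"
    have "fps_nth (inverse (1 - fps_const e * fps_X) ^ Suc j) i * fps_nth (inverse (1 - fps_const e * fps_X)) (q - i)
       = of_nat ((i + j) choose i) * e^i * e^(q - i)" by (simp only: Suc.IH h_nth)
    also have "\<dots> = of_nat ((j + i) choose i) * e^q" using i by (simp add: add.commute mult.assoc power_add[symmetric])
    finally show "fps_nth (inverse (1 - fps_const e * fps_X) ^ Suc j) i * fps_nth (inverse (1 - fps_const e * fps_X)) (q - i) = of_nat ((j + i) choose i) * e^q" .
  qed simp
  also have "\<dots> = of_nat (\<Sum>i\<le>q. (j + i) choose i) * e^q"
    by (simp add: sum_distrib_right atLeast0AtMost)
  also have "(\<Sum>i\<le>q. (j + i) choose i) = (q + Suc j) choose q"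
    unfolding sum_choose_lower by (simp add: add_ac)
  finally show ?case .
qed

lemma one_minus_nth:
  "n \<ge> 1 \<Longrightarrow> fps_nth ((1 - fps_const (e::complex) * fps_X) * P) n = fps_nth P n - e * fps_nth P (n - 1)"
  by (cases n) (simp_all add: algebra_simps)

lemma coeff_T:
  fixes g :: "complex fps" and e :: complex
  shows "fps_nth ((1 - fps_const e * fps_X) * (g oo (fps_X * inverse (1 - fps_const e * fps_X)))) (m + 2)
     = (\<Sum>k\<le>m. of_nat (m choose k) * e^(m - k) * fps_nth g (k + 2))"
proof -
  define h where "h = inverse (1 - fps_const e * fps_X)"
  define M where "M = fps_X * h"
  have eh: "(1 - fps_const e * fps_X) * h = 1" unfolding h_def by (rule inverse_mult_eq_1') simp
  define n where "n = m + 2"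
  have Mn: "fps_nth (M ^ n) (n - 1) = 0" unfolding M_def power_mult_distrib fps_X_power_mult_nth
    by (simp add: n_def)
  have "fps_nth ((1 - fps_const e * fps_X) * (g oo M)) n = fps_nth (g oo M) n - e * fps_nth (g oo M) (n - 1)"
    by (rule one_minus_nth) (simp add: n_def)
  also have "fps_nth (g oo M) (n - 1) = (\<Sum>i=0..n. fps_nth g i * fps_nth (M ^ i) (n - 1))"
  proof -
    have "{0..n} = insert n {0..n-1}" by (auto simp: n_def)
    moreover have "n \<notin> {0..n-1}" by (simp add: n_def)
    moreover have "fps_nth (M ^ n) (n - Suc 0) = 0" using Mn by simp
    ultimately show ?thesis by (simp add: fps_compose_nth)
  qed
  also have "fps_nth (g oo M) n - e * (\<Sum>i=0..n. fps_nth g i * fps_nth (M ^ i) (n - 1))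
      = (\<Sum>i=0..n. fps_nth g i * fps_nth ((1 - fps_const e * fps_X) * M ^ i) n)"
    apply (simp only: fps_compose_nth sum_distrib_left sum_subtractf[symmetric])
    apply (rule sum.cong)
     apply (simp_all add: one_minus_nth n_def algebra_simps)
    done
  also have "\<dots> = (\<Sum>k=0..m. fps_nth g (k + 2) * fps_nth ((1 - fps_const e * fps_X) * M ^ (k + 2)) n)"
  proof -
    have F0: "fps_nth ((1 - fps_const e * fps_X) * M ^ 0) n = 0" by (simp add: n_def)
    have "(1 - fps_const e * fps_X) * M ^ 1 = fps_X * ((1 - fps_const e * fps_X) * h)"
      unfolding M_def by (simp add: algebra_simps)
    then have F1: "fps_nth ((1 - fps_const e * fps_X) * M ^ 1) n = 0" using eh by (simp add: n_def)
    have n_eq: "n = Suc (Suc m)" by (simp add: n_def)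
    show ?thesis unfolding n_eq
      by (simp only: sum.atLeast0_atMost_Suc_shift comp_def)
         (use F0 F1 in \<open>simp add: n_eq One_nat_def\<close>)
  qed
  also have "\<dots> = (\<Sum>k=0..m. of_nat (m choose k) * e^(m - k) * fps_nth g (k + 2))"
  proof (rule sum.cong)
    fix k assume k: "k \<in> {0..m}"
    have "(1 - fps_const e * fps_X) * M ^ (k + 2) = fps_X ^ (k + 2) * h ^ Suc k * ((1 - fps_const e * fps_X) * h)"
      unfolding M_def power_mult_distrib by (simp add: algebra_simps)
    also have "\<dots> = fps_X ^ (k + 2) * h ^ Suc k" using eh by simp
    finally have eqn: "(1 - fps_const e * fps_X) * M ^ (k + 2) = fps_X ^ (k + 2) * h ^ Suc k" .
    have "fps_nth ((1 - fps_const e * fps_X) * M ^ (k + 2)) n = fps_nth (h ^ Suc k) (m - k)"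
      unfolding eqn fps_X_power_mult_nth using k by (simp add: n_def)
    also have "\<dots> = of_nat (m choose k) * e^(m - k)"
      unfolding h_def h_pow_nth using k by (simp add: binomial_symmetric[of k m])
    finally show "fps_nth g (k + 2) * fps_nth ((1 - fps_const e * fps_X) * M ^ (k + 2)) n = of_nat (m choose k) * e^(m - k) * fps_nth g (k + 2)"
      by simp
  qed simp
  finally show ?thesis unfolding n_def M_def h_def by (simp add: atLeast0AtMost)
qed



definition bt :: "complex \<Rightarrow> (nat \<Rightarrow> complex) \<Rightarrow> nat \<Rightarrow> complex" where
  "bt t a N = (\<Sum>m\<le>N. of_nat (N choose m) * t^(N - m) * a m)"

lemma bt_Suc: "bt t a (Suc N) = t * bt t a N + bt t (\<lambda>m. a (Suc m)) N"
proof -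
  have A: "bt t a (Suc N) = t^(Suc N) * a 0 + (\<Sum>m\<le>N. of_nat (N choose m) * t^(N - m) * a (Suc m))
      + (\<Sum>m\<le>N. of_nat (N choose Suc m) * t^(N - m) * a (Suc m))"
    unfolding bt_def sum.atMost_Suc_shift
    by (simp add: sum.distrib[symmetric] algebra_simps)
  have "t * bt t a N = (\<Sum>m\<le>N. of_nat (N choose m) * t^(Suc N - m) * a m)"
    unfolding bt_def sum_distrib_left
    by (rule sum.cong) (simp_all add: Suc_diff_le)
  also have "\<dots> = (\<Sum>m\<le>Suc N. of_nat (N choose m) * t^(Suc N - m) * a m)"
    by simp
  also have "\<dots> = t^(Suc N) * a 0 + (\<Sum>m\<le>N. of_nat (N choose Suc m) * t^(N - m) * a (Suc m))"
    unfolding sum.atMost_Suc_shift by simp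
  finally show ?thesis using A unfolding bt_def by simp
qed

lemma bt_core: "bt t g (i + j) = (\<Sum>k\<le>i. of_nat (i choose k) * t^(i - k) * bt t (\<lambda>m. g (k + m)) j)"
proof (induction i arbitrary: g)
  case 0
  then show ?case by simp
next
  case (Suc i)
  have "bt t g (Suc i + j) = t * bt t g (i + j) + bt t (\<lambda>m. g (Suc m)) (i + j)"
    by (simp add: bt_Suc)
  also have "\<dots> = t * (\<Sum>k\<le>i. of_nat (i choose k) * t^(i - k) * bt t (\<lambda>m. g (k + m)) j)
       + (\<Sum>k\<le>i. of_nat (i choose k) * t^(i - k) * bt t (\<lambda>m. g (Suc (k + m))) j)"
    using Suc.IH[of g] Suc.IH[of "\<lambda>m. g (Suc m)"] by simp
  also have "\<dots> = (\<Sum>k\<le>Suc i. of_nat (Suc i choose k) * t^(Suc i - k) * bt t (\<lambda>m. g (k + m)) j)"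
    using bt_Suc[of t "\<lambda>k. bt t (\<lambda>m. g (k + m)) j" i] unfolding bt_def[of t _ "Suc i"] bt_def[of t _ i]
    by simp
  finally show ?case .
qed

lemma bt_double:
  "(\<Sum>k\<le>i. \<Sum>l\<le>j. of_nat (i choose k) * t^(i - k) * (of_nat (j choose l) * t^(j - l)) * g (k + l))
   = bt t g (i + j)"
  apply (subst bt_core)
  apply (rule sum.cong, rule refl)
  apply (simp add: bt_def sum_distrib_left algebra_simps)
  done



lemma mult_entry:
  fixes A B :: "'a::comm_ring_1 mat"
  assumes "A \<in> carrier_mat n k" "B \<in> carrier_mat k m" "i < n" "j < m"
  shows "(A * B) $$ (i, j) = (\<Sum>l<k. A $$ (i, l) * B $$ (l, j))"
  using assms by (simp add: scalar_prod_def atLeast0LessThan)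

lemma sum_if_le:
  fixes F :: "nat \<Rightarrow> 'a::comm_monoid_add"
  assumes "i < n"
  shows "(\<Sum>k<n. if k \<le> i then F k else 0) = (\<Sum>k\<le>i. F k)"
proof -
  have "(\<Sum>k<n. if k \<le> i then F k else 0) = sum F ({..<n} \<inter> {k. k \<le> i})"
    by (simp add: sum.inter_restrict)
  also have "{..<n} \<inter> {k. k \<le> i} = {..i}" using assms by auto
  finally show ?thesis .
qed

lemma det_binom_P:
  "det (mat n n (\<lambda>(i, k). if k \<le> i then of_nat (i choose k) * t^(i - k) else (0::complex))) = 1"
proof -
  have "diag_mat (mat n n (\<lambda>(i, k). if k \<le> i then of_nat (i choose k) * t^(i - k) else (0::complex))) = replicate n 1"
    by (rule nth_equalityI) (auto simp: diag_mat_def)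
  then show ?thesis by (subst det_lower_triangular[of n]) auto
qed

lemma hankel_binom:
  fixes g :: "nat \<Rightarrow> complex"
  shows "det (mat n n (\<lambda>(i, j). bt t g (i + j))) = det (mat n n (\<lambda>(i, j). g (i + j)))"
proof -
  define P where "P = mat n n (\<lambda>(i, k). if k \<le> i then of_nat (i choose k) * t^(i - k) else (0::complex))"
  define H where "H = mat n n (\<lambda>(i, j). g (i + j))"
  have Pc: "P \<in> carrier_mat n n" and Hc: "H \<in> carrier_mat n n" unfolding P_def H_def by auto
  have PH: "P * H \<in> carrier_mat n n" using Pc Hc by auto
  have PT: "transpose_mat P \<in> carrier_mat n n" using Pc by auto
  have "mat n n (\<lambda>(i, j). bt t g (i + j)) = P * H * transpose_mat P"
  proof (rule eq_matI)
    fix i j assume i: "i < dim_row (P * H * transpose_mat P)" and j: "j < dim_col (P * H * transpose_mat P)"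
    then have i: "i < n" and j: "j < n" using PH PT by auto
    have "(P * H * transpose_mat P) $$ (i, j) = (\<Sum>l<n. (P * H) $$ (i, l) * transpose_mat P $$ (l, j))"
      by (rule mult_entry[OF PH PT i j])
    also have "\<dots> = (\<Sum>l<n. (\<Sum>k<n. P $$ (i, k) * H $$ (k, l)) * P $$ (j, l))"
    proof (rule sum.cong)
      fix l assume l: "l \<in> {..<n}"
      have e1: "(P * H) $$ (i, l) = (\<Sum>k<n. P $$ (i, k) * H $$ (k, l))" using l by (intro mult_entry[OF Pc Hc i]) simp
      have e2: "transpose_mat P $$ (l, j) = P $$ (j, l)" using l j Pc by simp
      show "(P * H) $$ (i, l) * transpose_mat P $$ (l, j) = (\<Sum>k<n. P $$ (i, k) * H $$ (k, l)) * P $$ (j, l)"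
        unfolding e1 e2 by (rule refl)
    qed simp
    also have "\<dots> = (\<Sum>l<n. if l \<le> j then (\<Sum>k\<le>i. of_nat (i choose k) * t^(i - k) * g (k + l)) * (of_nat (j choose l) * t^(j - l)) else 0)"
    proof (rule sum.cong)
      fix l assume l: "l \<in> {..<n}"
      have "(\<Sum>k<n. P $$ (i, k) * H $$ (k, l)) = (\<Sum>k<n. if k \<le> i then of_nat (i choose k) * t^(i - k) * g (k + l) else 0)"
        by (rule sum.cong) (use i l in \<open>auto simp: P_def H_def\<close>)
      also have "\<dots> = (\<Sum>k\<le>i. of_nat (i choose k) * t^(i - k) * g (k + l))" by (rule sum_if_le[OF i])
      finally show "(\<Sum>k<n. P $$ (i, k) * H $$ (k, l)) * P $$ (j, l) = (if l \<le> j then (\<Sum>k\<le>i. of_nat (i choose k) * t^(i - k) * g (k + l)) * (of_nat (j choose l) * t^(j - l)) else 0)"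
        using j l by (simp add: P_def)
    qed simp
    also have "\<dots> = (\<Sum>l\<le>j. (\<Sum>k\<le>i. of_nat (i choose k) * t^(i - k) * g (k + l)) * (of_nat (j choose l) * t^(j - l)))"
      by (rule sum_if_le[OF j])
    also have "\<dots> = (\<Sum>k\<le>i. \<Sum>l\<le>j. of_nat (i choose k) * t^(i - k) * (of_nat (j choose l) * t^(j - l)) * g (k + l))"
      by (subst sum.swap) (simp add: sum_distrib_left sum_distrib_right algebra_simps)
    also have "\<dots> = bt t g (i + j)" by (rule bt_double)
    finally show "mat n n (\<lambda>(i, j). bt t g (i + j)) $$ (i, j) = (P * H * transpose_mat P) $$ (i, j)"
      using i j by simp
  qed (use PH PT in auto)
  then have "det (mat n n (\<lambda>(i, j). bt t g (i + j))) = det (P * H) * det (transpose_mat P)"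
    using det_mult[OF PH PT] by simp
  also have "\<dots> = det H"
    using det_mult[OF Pc Hc] det_transpose[OF Pc] det_binom_P[of n t] unfolding P_def by simp
  finally show ?thesis unfolding H_def .
qed



lemma sum_if_nz:
  fixes G :: "nat \<Rightarrow> 'a::comm_monoid_add"
  shows "(\<Sum>k\<le>j. if k = 0 then 0 else G k) = (\<Sum>k\<in>{1..j}. G k)"
proof -
  have "(\<Sum>k\<le>j. if k = 0 then 0 else G k) = (\<Sum>k\<le>j. if k \<in> {k. k \<noteq> 0} then G k else 0)"
    by (rule sum.cong) auto
  also have "\<dots> = sum G ({..j} \<inter> {k. k \<noteq> 0})" by (simp add: sum.inter_restrict)
  also have "{..j} \<inter> {k. k \<noteq> 0} = {1..j}" by auto
  finally show ?thesis .
qed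

lemma conv_split:
  fixes B C :: "complex fps"
  assumes BC: "B * C = 1" and i: "0 < i"
  shows "(\<Sum>k\<le>i. fps_nth C (i - k) * fps_nth B (k + j)) = - (\<Sum>k\<in>{1..j}. fps_nth C (i + k) * fps_nth B (j - k))"
proof -
  define F where "F q = fps_nth B q * fps_nth C (i + j - q)" for q
  have "(\<Sum>q=0..i+j. F q) = fps_nth (B * C) (i + j)" unfolding F_def by (simp add: fps_mult_nth)
  also have "\<dots> = 0" using BC i by simp
  finally have z: "(\<Sum>q=0..i+j. F q) = 0" .
  have "{0..i+j} = {0..<j} \<union> {j..i+j}" by auto
  then have "(\<Sum>q=0..i+j. F q) = (\<Sum>q\<in>{0..<j}. F q) + (\<Sum>q\<in>{j..i+j}. F q)"
    by (simp add: sum.union_disjoint ivl_disj_int)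
  moreover have "(\<Sum>q\<in>{j..i+j}. F q) = (\<Sum>k\<le>i. fps_nth C (i - k) * fps_nth B (k + j))"
  proof -
    have "(\<Sum>q\<in>{j..i+j}. F q) = (\<Sum>q\<in>{0+j..i+j}. F q)" by simp
    also have "\<dots> = (\<Sum>k\<in>{0..i}. F (k + j))" by (rule sum.shift_bounds_cl_nat_ivl)
    also have "\<dots> = (\<Sum>k\<le>i. fps_nth C (i - k) * fps_nth B (k + j))"
      unfolding F_def atLeast0AtMost by (rule sum.cong) (auto simp: mult.commute)
    finally show ?thesis .
  qed
  moreover have "(\<Sum>q\<in>{0..<j}. F q) = (\<Sum>k\<in>{1..j}. fps_nth C (i + k) * fps_nth B (j - k))"
    by (rule sum.reindex_bij_witness[of _ "\<lambda>k. j - k" "\<lambda>q. j - q"]) (auto simp: F_def mult.commute)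
  ultimately show ?thesis using z by (simp add: add_eq_0_iff)
qed

lemma hankel_step:
  fixes C :: "complex fps"
  assumes C0: "fps_nth C 0 = 1"
  shows "det (mat (Suc n) (Suc n) (\<lambda>(i, j). fps_nth (inverse C) (i + j)))
       = (-1)^n * det (mat n n (\<lambda>(i, j). fps_nth C (i + j + 2)))"
proof -
  define B where "B = inverse C"
  have BC: "B * C = 1" unfolding B_def by (rule inverse_mult_eq_1) (simp add: C0)
  have B0: "fps_nth B 0 = 1" unfolding B_def using C0 by simp
  define m where "m = Suc n"
  define Tc where "Tc = mat m m (\<lambda>(i, k). if k \<le> i then fps_nth C (i - k) else 0)"
  define Hb where "Hb = mat m m (\<lambda>(i, j). fps_nth B (i + j))"
  define N1 where "N1 = mat m m (\<lambda>(i, j). if i = 0 then (if j = 0 then 1 else 0) else if j = 0 then 0 else - fps_nth C (i + j))"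
  define U where "U = mat m m (\<lambda>(k, j). if k \<le> j then fps_nth B (j - k) else 0)"
  have Tcc: "Tc \<in> carrier_mat m m" and Hbc: "Hb \<in> carrier_mat m m" and N1c: "N1 \<in> carrier_mat m m"
    and Uc: "U \<in> carrier_mat m m" unfolding Tc_def Hb_def N1_def U_def by auto
  have eq: "Tc * Hb = N1 * U"
  proof (rule eq_matI)
    fix i j assume "i < dim_row (N1 * U)" "j < dim_col (N1 * U)"
    then have i: "i < m" and j: "j < m" using N1c Uc by auto
    have "(Tc * Hb) $$ (i, j) = (\<Sum>k<m. Tc $$ (i, k) * Hb $$ (k, j))" by (rule mult_entry[OF Tcc Hbc i j])
    also have "\<dots> = (\<Sum>k<m. if k \<le> i then fps_nth C (i - k) * fps_nth B (k + j) else 0)"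
      by (rule sum.cong) (use i j in \<open>auto simp: Tc_def Hb_def\<close>)
    also have "\<dots> = (\<Sum>k\<le>i. fps_nth C (i - k) * fps_nth B (k + j))" by (rule sum_if_le[OF i])
    finally have L: "(Tc * Hb) $$ (i, j) = (\<Sum>k\<le>i. fps_nth C (i - k) * fps_nth B (k + j))" .
    have "(N1 * U) $$ (i, j) = (\<Sum>k<m. N1 $$ (i, k) * U $$ (k, j))" by (rule mult_entry[OF N1c Uc i j])
    also have "\<dots> = (\<Sum>k<m. if k \<le> j then N1 $$ (i, k) * fps_nth B (j - k) else 0)"
      by (rule sum.cong) (use i j in \<open>auto simp: U_def\<close>)
    also have "\<dots> = (\<Sum>k\<le>j. N1 $$ (i, k) * fps_nth B (j - k))" by (rule sum_if_le[OF j])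
    finally have R: "(N1 * U) $$ (i, j) = (\<Sum>k\<le>j. N1 $$ (i, k) * fps_nth B (j - k))" .
    show "(Tc * Hb) $$ (i, j) = (N1 * U) $$ (i, j)"
    proof (cases "i = 0")
      case True
      have "(\<Sum>k\<le>j. N1 $$ (i, k) * fps_nth B (j - k)) = (\<Sum>k\<le>j. if k = 0 then fps_nth B j else 0)"
        by (rule sum.cong) (use i j True in \<open>auto simp: N1_def\<close>)
      also have "\<dots> = fps_nth B j" by simp
      finally show ?thesis unfolding L R using True C0 by simp
    next
      case False
      have "(\<Sum>k\<le>j. N1 $$ (i, k) * fps_nth B (j - k)) = (\<Sum>k\<le>j. if k = 0 then 0 else - (fps_nth C (i + k) * fps_nth B (j - k)))"
        by (rule sum.cong) (use i j False in \<open>auto simp: N1_def\<close>)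
      also have "\<dots> = (\<Sum>k\<in>{1..j}. - (fps_nth C (i + k) * fps_nth B (j - k)))" by (rule sum_if_nz)
      also have "\<dots> = (\<Sum>k\<le>i. fps_nth C (i - k) * fps_nth B (k + j))"
        using conv_split[OF BC, of i j] False by (simp add: sum_negf)
      finally show ?thesis unfolding L R by simp
    qed
  qed (use Tcc Hbc N1c Uc in auto)
  have dTc: "det Tc = 1"
  proof -
    have "diag_mat Tc = replicate m 1" by (rule nth_equalityI) (auto simp: diag_mat_def Tc_def C0)
    then show ?thesis by (subst det_lower_triangular[of m]) (auto simp: Tc_def)
  qed
  have dU: "det U = 1"
  proof -
    have "diag_mat U = replicate m 1" by (rule nth_equalityI) (auto simp: diag_mat_def U_def B0)
    moreover have "upper_triangular U" unfolding upper_triangular_def U_def by auto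
    ultimately show ?thesis using det_upper_triangular[OF _ Uc] by auto
  qed
  define Cm where "Cm = mat n n (\<lambda>(i, j). fps_nth C (i + j + 2))"
  have Cmc: "Cm \<in> carrier_mat n n" unfolding Cm_def by auto
  have N1b: "N1 = four_block_mat (1\<^sub>m 1) (0\<^sub>m 1 n) (0\<^sub>m n 1) ((-1) \<cdot>\<^sub>m Cm)"
  proof (rule eq_matI)
    fix i j assume "i < dim_row (four_block_mat (1\<^sub>m 1) (0\<^sub>m 1 n) (0\<^sub>m n 1) ((-1) \<cdot>\<^sub>m Cm))"
      "j < dim_col (four_block_mat (1\<^sub>m 1) (0\<^sub>m 1 n) (0\<^sub>m n 1) ((-1) \<cdot>\<^sub>m Cm))"
    then have i: "i < Suc n" and j: "j < Suc n" using Cmc by auto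
    show "N1 $$ (i, j) = four_block_mat (1\<^sub>m 1) (0\<^sub>m 1 n) (0\<^sub>m n 1) ((-1) \<cdot>\<^sub>m Cm) $$ (i, j)"
    proof (cases "i = 0 \<or> j = 0")
      case True
      then show ?thesis using i j Cmc by (auto simp: N1_def m_def)
    next
      case False
      then obtain i' j' where ii: "i = Suc i'" and jj: "j = Suc j'" by (cases i; cases j) auto
      show ?thesis using i j Cmc unfolding ii jj by (simp add: N1_def m_def Cm_def)
    qed
  qed (use Cmc in \<open>auto simp: N1_def m_def\<close>)
  have dN1: "det N1 = (-1)^n * det Cm"
    unfolding N1b using Cmc
    by (subst det_four_block_mat_lower_left_zero_col) auto
  have "det Tc * det Hb = det N1 * det U"
    using det_mult[OF Tcc Hbc] det_mult[OF N1c Uc] eq by simp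
  then have "det Hb = (-1)^n * det Cm" using dTc dU dN1 by simp
  then show ?thesis unfolding Hb_def Cm_def m_def B_def .
qed


lemma hankel_formula:
  fixes \<alpha> \<beta> r s :: complex
  shows "hankel_transform (revert_transform (G_rs \<alpha> \<beta> r s)) n =
    (-1)^n * det (mat n n (\<lambda>(i, j). fps_nth (inverse (fps_shift 1 (fps_inv (fps_X * G_rs \<alpha> \<beta> 0 0)))) (i + j + 2)))"
proof -
  define u0 where "u0 = fps_inv (fps_X * G_rs \<alpha> \<beta> 0 0)"
  define c0 where "c0 = inverse (fps_shift 1 u0)"
  define M where "M = fps_X * inverse (1 - fps_const (r - s) * fps_X)"
  define c' where "c' = (1 - fps_const (r - s) * fps_X) * (c0 oo M) + fps_const r * fps_X"
  note rf = revert_formula[OF u0_def c0_def M_def c'_def]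
  have rt: "revert_transform (G_rs \<alpha> \<beta> r s) = (\<lambda>k. fps_nth (inverse c') k)"
    by (rule ext) (simp add: revert_transform_def rf(1))
  have "hankel_transform (revert_transform (G_rs \<alpha> \<beta> r s)) n
      = det (mat (Suc n) (Suc n) (\<lambda>(i, j). fps_nth (inverse c') (i + j)))"
    unfolding hankel_transform_def rt by simp
  also have "\<dots> = (-1)^n * det (mat n n (\<lambda>(i, j). fps_nth c' (i + j + 2)))"
    by (rule hankel_step[OF rf(2)])
  also have "mat n n (\<lambda>(i, j). fps_nth c' (i + j + 2)) = mat n n (\<lambda>(i, j). bt (r - s) (\<lambda>k. fps_nth c0 (k + 2)) (i + j))"
  proof -
    have "fps_nth c' (m + 2) = bt (r - s) (\<lambda>k. fps_nth c0 (k + 2)) m" for m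
    proof -
      have "fps_nth c' (m + 2) = fps_nth ((1 - fps_const (r - s) * fps_X) * (c0 oo M)) (m + 2)"
        unfolding c'_def by simp
      also have "\<dots> = bt (r - s) (\<lambda>k. fps_nth c0 (k + 2)) m"
        unfolding M_def coeff_T bt_def by simp
      finally show ?thesis .
    qed
    then show ?thesis by (simp add: add.assoc)
  qed
  also have "det (mat n n (\<lambda>(i, j). bt (r - s) (\<lambda>k. fps_nth c0 (k + 2)) (i + j)))
      = det (mat n n (\<lambda>(i, j). fps_nth c0 (i + j + 2)))"
    by (rule hankel_binom)
  finally show ?thesis unfolding c0_def u0_def .
qed

theorem mainTheorem4:
  fixes \<alpha> \<beta> r s r' s' :: complex
  shows "hankel_transform (revert_transform (G_rs \<alpha> \<beta> r s)) =
         hankel_transform (revert_transform (G_rs \<alpha> \<beta> r' s'))"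
  by (rule ext) (simp only: hankel_formula)

end
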